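(* Let $\Pi_q$ be a projective plane (not necessarily Desarguesian) of order $q$, let $\mu\ge 2$ be an integer and let $\delta=1/\sqrt{(q+1)\ln(q+1)}$. (i) Define $D_1=1$ and $D_i=D_{i-1}+1+\frac{D_{i-1}+\delta}{q}+\delta$ for $i=2,3,\dots,\mu$. Then $\Pi_q$ contains a $(1,\mu)$-saturating set of size $k\le 2D_\mu\sqrt{(q+1)\ln(q+1)}+2$. (ii) If $\mu\le\sqrt{q}$, then $\Pi_q$ contains a $(1,\mu)$-saturating set of size $k\le 2(\mu+1)\sqrt{(q+1)\ln(q+1)}+2$. (iii) If $\mu\le \frac{(1-\delta)q-\delta+1}{2}+1$, then $\Pi_q$ contains a $(1,\mu)$-saturating set of size $k\le 2(2\mu-1)\sqrt{(q+1)\ln(q+1)}+2$.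
   Context: A point set $S\subset\Pi_q$ is $(1,\mu)$-saturating if for every point $Q\in\Pi_q\setminus S$ the number of secants of $S$ through $Q$, counted with multiplicity, is at least $\mu$, where a line $\ell$ meeting $S$ in at least two points is a secant and has multiplicity $\binom{\#(\ell\cap S)}{2}$. Here $\ln$ is the natural logarithm. *)

theory Defs
  imports Complex_Main
begin

definition projective_plane :: "'a set \<Rightarrow> 'a set set \<Rightarrow> nat \<Rightarrow> bool" where
  "projective_plane P L q \<longleftrightarrow>
     finite P \<and>
     (\<forall>l\<in>L. l \<subseteq> P) \<and>
     (\<forall>x\<in>P. \<forall>y\<in>P. x \<noteq> y \<longrightarrow> (\<exists>!l. l \<in> L \<and> x \<in> l \<and> y \<in> l)) \<and>
     (\<forall>l\<in>L. \<forall>m\<in>L. l \<noteq> m \<longrightarrow> (\<exists>x\<in>P. l \<inter> m = {x})) \<and>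
     (\<exists>a\<in>P. \<exists>b\<in>P. \<exists>c\<in>P. \<exists>d\<in>P. distinct [a,b,c,d] \<and>
        (\<forall>l\<in>L. card (l \<inter> {a,b,c,d}) \<le> 2)) \<and>
     (\<forall>l\<in>L. card l = q + 1)"

text \<open>Number of secants of S through Q, counted with multiplicity (card(l \<inter> S) choose 2).\<close>
definition secant_count :: "'a set set \<Rightarrow> 'a set \<Rightarrow> 'a \<Rightarrow> nat" where
  "secant_count L S Q = (\<Sum>l\<in>{l\<in>L. Q \<in> l \<and> card (l \<inter> S) \<ge> 2}. card (l \<inter> S) choose 2)"

definition saturating_1 :: "'a set \<Rightarrow> 'a set set \<Rightarrow> nat \<Rightarrow> 'a set \<Rightarrow> bool" where
  "saturating_1 P L \<mu> S \<longleftrightarrow> S \<subseteq> P \<and> (\<forall>Q\<in>P - S. secant_count L S Q \<ge> \<mu>)"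

text \<open>D q \<delta> i = D_i for i \<ge> 1 (D q \<delta> 0 is an unused dummy value).\<close>
primrec Dseq :: "real \<Rightarrow> real \<Rightarrow> nat \<Rightarrow> real" where
  "Dseq q \<delta> 0 = 1"
| "Dseq q \<delta> (Suc i) = (if i = 0 then 1 else Dseq q \<delta> i + 1 + (Dseq q \<delta> i + \<delta>) / q + \<delta>)"

end

theory Submission
  imports Defs "HOL-Analysis.Harmonic_Numbers"
begin



lemma pp_unf:
  assumes "projective_plane P L q"
  shows "finite P \<and>
     (\<forall>l\<in>L. l \<subseteq> P) \<and>
     (\<forall>x\<in>P. \<forall>y\<in>P. x \<noteq> y \<longrightarrow> (\<exists>!l. l \<in> L \<and> x \<in> l \<and> y \<in> l)) \<and>
     (\<forall>l\<in>L. \<forall>m\<in>L. l \<noteq> m \<longrightarrow> (\<exists>x\<in>P. l \<inter> m = {x})) \<and>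
     (\<exists>a\<in>P. \<exists>b\<in>P. \<exists>c\<in>P. \<exists>d\<in>P. distinct [a,b,c,d] \<and>
        (\<forall>l\<in>L. card (l \<inter> {a,b,c,d}) \<le> 2)) \<and>
     (\<forall>l\<in>L. card l = q + 1)"
  using assms unfolding projective_plane_def .

lemma pp_facts:
  assumes "projective_plane P L q"
  shows "finite P" "\<And>l. l\<in>L \<Longrightarrow> l \<subseteq> P"
    "\<And>x y. x\<in>P \<Longrightarrow> y\<in>P \<Longrightarrow> x \<noteq> y \<Longrightarrow> \<exists>!l. l \<in> L \<and> x \<in> l \<and> y \<in> l"
    "\<And>l m. l\<in>L \<Longrightarrow> m\<in>L \<Longrightarrow> l \<noteq> m \<Longrightarrow> \<exists>x\<in>P. l \<inter> m = {x}"
    "\<And>l. l\<in>L \<Longrightarrow> card l = q + 1"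
proof -
  note h = pp_unf[OF assms]
  show "finite P" using h by (rule conjunct1)
  show "\<And>l. l\<in>L \<Longrightarrow> l \<subseteq> P" using h[THEN conjunct2, THEN conjunct1] by (rule bspec)
  show "\<And>x y. x\<in>P \<Longrightarrow> y\<in>P \<Longrightarrow> x \<noteq> y \<Longrightarrow> \<exists>!l. l \<in> L \<and> x \<in> l \<and> y \<in> l"
    using h[THEN conjunct2, THEN conjunct2, THEN conjunct1] by (elim ballE impE) auto
  show "\<And>l m. l\<in>L \<Longrightarrow> m\<in>L \<Longrightarrow> l \<noteq> m \<Longrightarrow> \<exists>x\<in>P. l \<inter> m = {x}"
    using h[THEN conjunct2, THEN conjunct2, THEN conjunct2, THEN conjunct1] by (elim ballE impE) auto
  show "\<And>l. l\<in>L \<Longrightarrow> card l = q + 1"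
    using h[THEN conjunct2, THEN conjunct2, THEN conjunct2, THEN conjunct2, THEN conjunct2] by (rule bspec)
qed

lemma pp_four:
  assumes "projective_plane P L q"
  shows "\<exists>a\<in>P. \<exists>b\<in>P. \<exists>c\<in>P. \<exists>d\<in>P. distinct [a,b,c,d] \<and>
        (\<forall>l\<in>L. card (l \<inter> {a,b,c,d}) \<le> 2)"
  using pp_unf[OF assms, THEN conjunct2, THEN conjunct2, THEN conjunct2, THEN conjunct2, THEN conjunct1] .

lemma pp_finL: assumes "projective_plane P L q" shows "finite L"
proof -
  have "L \<subseteq> Pow P" using pp_facts(2)[OF assms] by blast
  moreover have "finite (Pow P)" using pp_facts(1)[OF assms] by simp
  ultimately show ?thesis by (rule finite_subset)
qed

lemma pp_uniq:
  assumes "projective_plane P L q" "l\<in>L" "m\<in>L" "x\<noteq>y" "x\<in>l" "y\<in>l" "x\<in>m" "y\<in>m"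
  shows "l = m"
proof -
  have "x \<in> P" "y \<in> P" using assms pp_facts(2)[OF assms(1)] by auto
  then show ?thesis using pp_facts(3)[OF assms(1)] assms by blast
qed

lemma pp_meetQ:
  assumes "projective_plane P L q" "l\<in>L" "m\<in>L" "l\<noteq>m" "Q\<in>l" "Q\<in>m"
  shows "l \<inter> m = {Q}"
  using pp_facts(4)[OF assms(1-4)] assms(5,6) by (metis Int_iff singletonD)

definition lineof :: "'a set set \<Rightarrow> 'a \<Rightarrow> 'a \<Rightarrow> 'a set" where
  "lineof L x y = (THE l. l \<in> L \<and> x \<in> l \<and> y \<in> l)"

lemma lineof:
  assumes "projective_plane P L q" "x\<in>P" "y\<in>P" "x\<noteq>y"
  shows "lineof L x y \<in> L" "x \<in> lineof L x y" "y \<in> lineof L x y"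
    "\<And>l. l\<in>L \<Longrightarrow> x\<in>l \<Longrightarrow> y\<in>l \<Longrightarrow> l = lineof L x y"
proof -
  have e: "\<exists>!l. l \<in> L \<and> x \<in> l \<and> y \<in> l" using pp_facts(3)[OF assms(1)] assms by blast
  have "lineof L x y \<in> L \<and> x \<in> lineof L x y \<and> y \<in> lineof L x y"
    unfolding lineof_def using theI'[OF e] .
  thus "lineof L x y \<in> L" "x \<in> lineof L x y" "y \<in> lineof L x y" by auto
  show "\<And>l. l\<in>L \<Longrightarrow> x\<in>l \<Longrightarrow> y\<in>l \<Longrightarrow> l = lineof L x y"
    using e \<open>lineof L x y \<in> L \<and> x \<in> lineof L x y \<and> y \<in> lineof L x y\<close> by blast
qed

lemma card3: "a \<in> l \<Longrightarrow> b \<in> l \<Longrightarrow> c \<in> l \<Longrightarrow> distinct [a,b,c] \<Longrightarrow> {a,b,c} \<subseteq> l \<inter> {a,b,c,d}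
   \<Longrightarrow> finite l \<Longrightarrow> card (l \<inter> {a,b,c,d}) \<ge> 3"
proof -
  assume h: "{a,b,c} \<subseteq> l \<inter> {a,b,c,d}" "distinct [a,b,c]" "finite l"
  have "card {a,b,c} = 3" using h(2) by simp
  moreover have "card {a,b,c} \<le> card (l \<inter> {a,b,c,d})" using h(1) by (intro card_mono) auto
  ultimately show ?thesis by simp
qed

lemma pp_q2: assumes "projective_plane P L q" shows "q \<ge> 2"
proof (rule ccontr)
  assume "\<not> q \<ge> 2"
  hence q: "q + 1 \<le> 2" by simp
  obtain a b c d where abcd: "a\<in>P" "b\<in>P" "c\<in>P" "d\<in>P" "distinct [a,b,c,d]"
     and lc: "\<forall>l\<in>L. card (l \<inter> {a,b,c,d}) \<le> 2" using pp_four[OF assms] by blast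
  define l1 where "l1 = lineof L a b"
  define l2 where "l2 = lineof L c d"
  have ab: "a \<noteq> b" "c \<noteq> d" using abcd(5) by auto
  have l1: "l1 \<in> L" "a \<in> l1" "b \<in> l1" unfolding l1_def using lineof(1-3)[OF assms abcd(1,2) ab(1)] by auto
  have l2: "l2 \<in> L" "c \<in> l2" "d \<in> l2" unfolding l2_def using lineof(1-3)[OF assms abcd(3,4) ab(2)] by auto
  have fin: "finite l1" "finite l2" using l1 l2 pp_facts(1,2)[OF assms] finite_subset by blast+
  have "l1 = {a,b}"
  proof -
    have "{a,b} \<subseteq> l1" using l1 by auto
    moreover have "card {a,b} = 2" using abcd by auto
    moreover have "card l1 \<le> 2" using pp_facts(5)[OF assms l1(1)] q by simp
    ultimately show ?thesis using fin by (metis card_seteq)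
  qed
  have "l2 = {c,d}"
  proof -
    have "{c,d} \<subseteq> l2" using l2 by auto
    moreover have "card {c,d} = 2" using abcd by auto
    moreover have "card l2 \<le> 2" using pp_facts(5)[OF assms l2(1)] q by simp
    ultimately show ?thesis using fin by (metis card_seteq)
  qed
  have "l1 \<noteq> l2" using \<open>l1 = {a,b}\<close> \<open>l2 = {c,d}\<close> abcd by auto
  then obtain x where "l1 \<inter> l2 = {x}" using pp_facts(4)[OF assms l1(1) l2(1)] by blast
  thus False using \<open>l1 = {a,b}\<close> \<open>l2 = {c,d}\<close> abcd by auto
qed

lemma pp_avoid: assumes "projective_plane P L q" shows "\<exists>l\<in>L. Q \<notin> l"
proof (rule ccontr)
  assume "\<not> (\<exists>l\<in>L. Q \<notin> l)"
  hence allQ: "\<And>l. l \<in> L \<Longrightarrow> Q \<in> l" by blast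
  obtain a b c d where abcd: "a\<in>P" "b\<in>P" "c\<in>P" "d\<in>P" "distinct [a,b,c,d]"
     and lc: "\<forall>l\<in>L. card (l \<inter> {a,b,c,d}) \<le> 2" using pp_four[OF assms] by blast
  have finl: "\<And>l. l \<in> L \<Longrightarrow> finite l" using pp_facts(1,2)[OF assms] finite_subset by blast
  have L: "\<And>x y. x\<in>P \<Longrightarrow> y\<in>P \<Longrightarrow> x \<noteq> y \<Longrightarrow> lineof L x y \<in> L \<and> x \<in> lineof L x y \<and> y \<in> lineof L x y"
    using lineof[OF assms] by blast
  have no3: "\<And>l x y z. l \<in> L \<Longrightarrow> x \<in> l \<Longrightarrow> y \<in> l \<Longrightarrow> z \<in> l \<Longrightarrow> distinct [x,y,z] \<Longrightarrow>
       {x,y,z} \<subseteq> {a,b,c,d} \<Longrightarrow> False"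
  proof -
    fix l x y z assume h: "l \<in> L" "x \<in> l" "y \<in> l" "z \<in> l" "distinct [x,y,z]" "{x,y,z} \<subseteq> {a,b,c,d}"
    have "card {x,y,z} = 3" using h(5) by simp
    moreover have "card {x,y,z} \<le> card (l \<inter> {a,b,c,d})" using h finl[OF h(1)] by (intro card_mono) auto
    ultimately show False using lc h(1) by fastforce
  qed
  have "Q = a"
  proof (rule ccontr)
    assume "Q \<noteq> a"
    have "lineof L a b = lineof L a c"
      using pp_uniq[OF assms, of "lineof L a b" "lineof L a c" Q a] L[of a b] L[of a c] abcd allQ \<open>Q \<noteq> a\<close>
      by auto
    thus False using no3[of "lineof L a b" a b c] L[of a b] L[of a c] abcd by auto
  qed
  moreover have "Q = d"
  proof (rule ccontr)
    assume "Q \<noteq> d"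
    have "lineof L d b = lineof L d c"
      using pp_uniq[OF assms, of "lineof L d b" "lineof L d c" Q d] L[of d b] L[of d c] abcd allQ \<open>Q \<noteq> d\<close>
      by auto
    thus False using no3[of "lineof L d b" d b c] L[of d b] L[of d c] abcd by auto
  qed
  ultimately show False using abcd by auto
qed

lemma pp_cardP: assumes "projective_plane P L q" shows "card P \<le> q*q+q+1"
proof (cases "P = {}")
  case True thus ?thesis by simp
next
  case False
  then obtain Q where Q: "Q \<in> P" by blast
  obtain l0 where l0: "l0 \<in> L" "Q \<notin> l0" using pp_avoid[OF assms] by blast
  have l0P: "l0 \<subseteq> P" using pp_facts(2)[OF assms l0(1)] .
  have sub: "P - {Q} \<subseteq> (\<Union>x\<in>l0. lineof L Q x - {Q})"
  proof
    fix y assume y: "y \<in> P - {Q}"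
    let ?l = "lineof L Q y"
    have ly: "?l \<in> L" "Q \<in> ?l" "y \<in> ?l" using lineof[OF assms Q, of y] y by auto
    have "?l \<noteq> l0" using ly l0 by auto
    then obtain x where x: "x \<in> P" "?l \<inter> l0 = {x}" using pp_facts(4)[OF assms ly(1) l0(1)] by blast
    have "x \<noteq> Q" using x l0 by auto
    have "?l = lineof L Q x" using lineof(4)[OF assms Q x(1) \<open>x \<noteq> Q\<close>[symmetric], of ?l] ly x by auto
    thus "y \<in> (\<Union>x\<in>l0. lineof L Q x - {Q})" using x y ly by blast
  qed
  have fin0: "finite l0" using l0P pp_facts(1)[OF assms] finite_subset by blast
  have "card (P - {Q}) \<le> card (\<Union>x\<in>l0. lineof L Q x - {Q})"
  proof (rule card_mono[OF finite_UN_I[OF fin0] sub])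
    fix x assume x: "x \<in> l0"
    have "x \<in> P" "Q \<noteq> x" using x l0P l0 by auto
    hence "lineof L Q x \<subseteq> P" using lineof(1)[OF assms Q] pp_facts(2)[OF assms] by blast
    thus "finite (lineof L Q x - {Q})" using pp_facts(1)[OF assms] finite_subset by blast
  qed
  also have "\<dots> \<le> (\<Sum>x\<in>l0. card (lineof L Q x - {Q}))" by (rule card_UN_le[OF fin0])
  also have "\<dots> = (\<Sum>x\<in>l0. q)"
  proof (rule sum.cong[OF refl])
    fix x assume x: "x \<in> l0"
    have "x \<in> P" "x \<noteq> Q" using x l0P l0 by auto
    hence "lineof L Q x \<in> L" "Q \<in> lineof L Q x" using lineof[OF assms Q] by auto
    moreover have "finite (lineof L Q x)" using calculation pp_facts(1,2)[OF assms] finite_subset by blast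
    ultimately show "card (lineof L Q x - {Q}) = q" using pp_facts(5)[OF assms] by simp
  qed
  also have "\<dots> = (q+1)*q" using pp_facts(5)[OF assms l0(1)] by simp
  finally have "card (P - {Q}) \<le> (q+1)*q" .
  moreover have "card (P - {Q}) = card P - 1" using Q pp_facts(1)[OF assms] by simp
  ultimately show ?thesis using Q pp_facts(1)[OF assms] card_gt_0_iff by (simp add: algebra_simps)
qed




lemma ch2_mono: "(a::nat) \<le> b \<Longrightarrow> a choose 2 \<le> b choose 2"
  unfolding choose_two by (intro div_le_mono mult_le_mono) auto

lemma ch2_inc: "(c::nat) + 1 \<le> c' \<Longrightarrow> 2 \<le> c' \<Longrightarrow> (c choose 2) + 1 \<le> c' choose 2"
proof -
  assume h: "c + 1 \<le> c'" "2 \<le> c'"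
  show ?thesis
  proof (cases "c = 0")
    case True
    have "2 choose 2 \<le> c' choose 2" using ch2_mono h by blast
    moreover have "(2::nat) choose 2 = 1" "(0::nat) choose 2 = 0" by simp_all
    ultimately show ?thesis using True by (simp add: choose_two)
  next
    case False
    have "Suc c choose Suc (Suc 0) = (c choose Suc 0) + (c choose Suc (Suc 0))" by (rule binomial_Suc_Suc)
    hence "Suc c choose 2 = c + (c choose 2)" by (simp add: numeral_2_eq_2)
    moreover have "Suc c choose 2 \<le> c' choose 2" using ch2_mono h by simp
    ultimately show ?thesis using False by linarith
  qed
qed

lemma sc_alt:
  assumes "finite L"
  shows "secant_count L S Q = (\<Sum>l\<in>{l\<in>L. Q \<in> l}. card (l \<inter> S) choose 2)"
  unfolding secant_count_def
proof (rule sum.mono_neutral_left)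
  show "finite {l \<in> L. Q \<in> l}" using assms by simp
  show "{l \<in> L. Q \<in> l \<and> 2 \<le> card (l \<inter> S)} \<subseteq> {l \<in> L. Q \<in> l}" by auto
  show "\<forall>i\<in>{l \<in> L. Q \<in> l} - {l \<in> L. Q \<in> l \<and> 2 \<le> card (l \<inter> S)}. card (i \<inter> S) choose 2 = 0"
  proof
    fix i assume "i \<in> {l \<in> L. Q \<in> l} - {l \<in> L. Q \<in> l \<and> 2 \<le> card (l \<inter> S)}"
    hence "card (i \<inter> S) < 2" by auto
    thus "card (i \<inter> S) choose 2 = 0" using less_2_cases[of "card (i \<inter> S)"] by auto
  qed
qed

lemma sc_inc:
  assumes finL: "finite L" and finl: "\<And>l. l \<in> L \<Longrightarrow> finite l"
    and UU: "U \<subseteq> U'" and l0: "l0 \<in> L" "Q \<in> l0" and a: "a \<in> l0" "a \<in> U'" "a \<notin> U"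
    and b: "b \<in> l0" "b \<in> U'" "b \<noteq> a"
  shows "secant_count L U Q + 1 \<le> secant_count L U' Q"
proof -
  let ?A = "{l\<in>L. Q \<in> l}"
  have fA: "finite ?A" using finL by simp
  have l0A: "l0 \<in> ?A" using l0 by simp
  have mono: "\<And>l. l \<in> ?A \<Longrightarrow> card (l \<inter> U) choose 2 \<le> card (l \<inter> U') choose 2"
    using UU finl by (intro ch2_mono card_mono) auto
  have fl0: "finite l0" using finl l0 by simp
  have c1: "card (l0 \<inter> U) + 1 \<le> card (l0 \<inter> U')"
  proof -
    have "card (insert a (l0 \<inter> U)) \<le> card (l0 \<inter> U')" using a UU fl0 by (intro card_mono) auto
    moreover have "card (insert a (l0 \<inter> U)) = card (l0 \<inter> U) + 1" using a fl0 by simp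
    ultimately show ?thesis by simp
  qed
  have c2: "2 \<le> card (l0 \<inter> U')"
  proof -
    have "card {a,b} \<le> card (l0 \<inter> U')" using a b fl0 by (intro card_mono) auto
    thus ?thesis using b by simp
  qed
  have e1: "secant_count L U Q = (card (l0 \<inter> U) choose 2) + (\<Sum>l\<in>?A - {l0}. card (l \<inter> U) choose 2)"
    by (simp only: sc_alt[OF finL] sum.remove[OF fA l0A])
  have "secant_count L U Q + 1 = ((card (l0 \<inter> U) choose 2) + 1) + (\<Sum>l\<in>?A - {l0}. card (l \<inter> U) choose 2)"
    using e1 by linarith
  also have "\<dots> \<le> (card (l0 \<inter> U') choose 2) + (\<Sum>l\<in>?A - {l0}. card (l \<inter> U') choose 2)"
    using ch2_inc[OF c1 c2] mono by (intro add_mono sum_mono) auto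
  also have "\<dots> = secant_count L U' Q"
    by (simp only: sc_alt[OF finL] sum.remove[OF fA l0A])
  finally show ?thesis .
qed




definition bad :: "'a set set \<Rightarrow> 'a set \<Rightarrow> 'a \<Rightarrow> 'a set \<Rightarrow> bool" where
  "bad L T Q A \<longleftrightarrow> Q \<notin> A \<and> (\<forall>a\<in>A. \<forall>l\<in>L. Q \<in> l \<and> a \<in> l \<longrightarrow> l \<inter> (A \<union> T) = {a})"

definition Bset :: "'a set \<Rightarrow> 'a set set \<Rightarrow> 'a set \<Rightarrow> 'a \<Rightarrow> nat \<Rightarrow> 'a list set" where
  "Bset P L T Q m = {xs. set xs \<subseteq> P - T \<and> distinct xs \<and> length xs = m \<and> bad L T Q (set xs)}"

lemma bad_mono: "bad L T Q (insert y A) \<Longrightarrow> y \<notin> A \<Longrightarrow> bad L T Q A"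
  unfolding bad_def by blast

lemma allowed_card:
  assumes pp: "projective_plane P L q" and Q: "Q \<in> P - T"
    and xs: "xs \<in> Bset P L T Q m"
  shows "card {y. xs @ [y] \<in> Bset P L T Q (Suc m)} \<le> card (P - T) - 1 - m * q"
proof -
  let ?A = "set xs"
  let ?ln = "\<lambda>a. lineof L Q a"
  define W where "W = (\<Union>a\<in>?A. ?ln a - {Q})"
  have xsP: "?A \<subseteq> P - T" and dis: "distinct xs" and len: "length xs = m" and bd: "bad L T Q ?A"
    using xs unfolding Bset_def by auto
  have QP: "Q \<in> P" using Q by simp
  have QA: "Q \<notin> ?A" using bd unfolding bad_def by simp
  have lnp: "\<And>a. a \<in> ?A \<Longrightarrow> ?ln a \<in> L \<and> Q \<in> ?ln a \<and> a \<in> ?ln a"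
  proof -
    fix a assume "a \<in> ?A"
    hence "a \<in> P" "Q \<noteq> a" using xsP QA by auto
    thus "?ln a \<in> L \<and> Q \<in> ?ln a \<and> a \<in> ?ln a" using lineof[OF pp QP] by blast
  qed
  have lnint: "\<And>a. a \<in> ?A \<Longrightarrow> ?ln a \<inter> (?A \<union> T) = {a}"
    using bd lnp unfolding bad_def by blast
  have finl: "\<And>l. l \<in> L \<Longrightarrow> finite l" using pp_facts(1,2)[OF pp] finite_subset by blast
  have WP: "W \<subseteq> P - T"
  proof
    fix y assume "y \<in> W"
    then obtain a where a: "a \<in> ?A" "y \<in> ?ln a" "y \<noteq> Q" unfolding W_def by blast
    have "y \<in> P" using pp_facts(2)[OF pp] lnp[OF a(1)] a(2) by blast
    moreover have "y \<notin> T" using lnint[OF a(1)] a(2) xsP a(1) by blast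
    ultimately show "y \<in> P - T" by simp
  qed
  have cW: "card W = m * q"
  proof -
    have "card W = (\<Sum>a\<in>?A. card (?ln a - {Q}))"
      unfolding W_def
    proof (rule card_UN_disjoint)
      show "finite ?A" by simp
      show "\<forall>a\<in>?A. finite (?ln a - {Q})" using lnp finl by blast
      show "\<forall>a\<in>?A. \<forall>b\<in>?A. a \<noteq> b \<longrightarrow> (?ln a - {Q}) \<inter> (?ln b - {Q}) = {}"
      proof (intro ballI impI)
        fix a b assume ab: "a \<in> ?A" "b \<in> ?A" "a \<noteq> b"
        have "?ln a \<noteq> ?ln b"
        proof
          assume "?ln a = ?ln b"
          hence "b \<in> ?ln a \<inter> (?A \<union> T)" using lnp[OF ab(2)] ab(2) by auto
          thus False using lnint[OF ab(1)] ab(3) by auto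
        qed
        hence "?ln a \<inter> ?ln b = {Q}" using pp_meetQ[OF pp] lnp ab by blast
        thus "(?ln a - {Q}) \<inter> (?ln b - {Q}) = {}" by blast
      qed
    qed
    also have "\<dots> = (\<Sum>a\<in>?A. q)"
      using lnp finl pp_facts(5)[OF pp] by (intro sum.cong) auto
    also have "\<dots> = m * q" using distinct_card[OF dis] len by simp
    finally show ?thesis .
  qed
  have sub: "{y. xs @ [y] \<in> Bset P L T Q (Suc m)} \<subseteq> (P - T) - insert Q W"
  proof
    fix y assume "y \<in> {y. xs @ [y] \<in> Bset P L T Q (Suc m)}"
    hence y: "y \<in> P - T" "y \<notin> ?A" "bad L T Q (insert y ?A)" unfolding Bset_def by auto
    have "y \<noteq> Q" using y(3) unfolding bad_def by auto
    moreover have "y \<notin> W"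
    proof
      assume "y \<in> W"
      then obtain a where a: "a \<in> ?A" "y \<in> ?ln a" unfolding W_def by blast
      have "?ln a \<inter> (insert y ?A \<union> T) = {a}" using y(3) lnp[OF a(1)] a(1) unfolding bad_def by blast
      thus False using a y(2) by (metis Int_iff Un_iff insertI1 singletonD)
    qed
    ultimately show "y \<in> (P - T) - insert Q W" using y by simp
  qed
  have finPT: "finite (P - T)" using pp_facts(1)[OF pp] by simp
  have "card {y. xs @ [y] \<in> Bset P L T Q (Suc m)} \<le> card ((P - T) - insert Q W)"
    by (rule card_mono[OF _ sub]) (use finPT in simp)
  also have "\<dots> = card (P - T) - card (insert Q W)"
    using WP Q finPT by (intro card_Diff_subset) (auto intro: finite_subset)
  also have "card (insert Q W) = 1 + m * q"
  proof -
    have "Q \<notin> W" unfolding W_def by blast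
    moreover have "finite W" using WP finPT finite_subset by blast
    ultimately show ?thesis using cW by simp
  qed
  finally show ?thesis by simp
qed

lemma bad_count:
  assumes pp: "projective_plane P L q" and Q: "Q \<in> P - T"
  shows "card (Bset P L T Q m) \<le> (\<Prod>i<m. card (P - T) - 1 - i * q)"
proof (induction m)
  case 0
  have "Bset P L T Q 0 \<subseteq> {[]}" unfolding Bset_def by auto
  hence "card (Bset P L T Q 0) \<le> card {[] :: 'a list}" by (intro card_mono) auto
  thus ?case by simp
next
  case (Suc m)
  let ?al = "\<lambda>xs. {y. xs @ [y] \<in> Bset P L T Q (Suc m)}"
  have finPT: "finite (P - T)" using pp_facts(1)[OF pp] by simp
  have finB: "\<And>k. finite (Bset P L T Q k)"
  proof -
    fix k
    have "Bset P L T Q k \<subseteq> {xs. set xs \<subseteq> P - T \<and> length xs = k}" unfolding Bset_def by auto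
    thus "finite (Bset P L T Q k)" using finite_lists_length_eq[OF finPT] finite_subset by blast
  qed
  have final: "\<And>xs. finite (?al xs)"
  proof -
    fix xs
    have "?al xs \<subseteq> P - T" unfolding Bset_def by auto
    thus "finite (?al xs)" using finPT finite_subset by blast
  qed
  have "Bset P L T Q (Suc m) \<subseteq> (\<lambda>(xs,y). xs @ [y]) ` (SIGMA xs:Bset P L T Q m. ?al xs)"
  proof
    fix zs assume zs: "zs \<in> Bset P L T Q (Suc m)"
    have "length zs = Suc m" using zs unfolding Bset_def by simp
    then obtain xs y where zxy: "zs = xs @ [y]" by (metis length_Suc_conv_rev)
    have "xs \<in> Bset P L T Q m"
      using zs zxy bad_mono[of L T Q y "set xs"] unfolding Bset_def by auto
    thus "zs \<in> (\<lambda>(xs,y). xs @ [y]) ` (SIGMA xs:Bset P L T Q m. ?al xs)" using zs zxy by force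
  qed
  hence "card (Bset P L T Q (Suc m)) \<le> card ((\<lambda>(xs,y). xs @ [y]) ` (SIGMA xs:Bset P L T Q m. ?al xs))"
    by (intro card_mono finite_imageI) (use finB final in auto)
  also have "\<dots> \<le> card (SIGMA xs:Bset P L T Q m. ?al xs)" by (rule card_image_le) (use finB final in auto)
  also have "\<dots> = (\<Sum>xs\<in>Bset P L T Q m. card (?al xs))" by (rule card_SigmaI) (use finB final in auto)
  also have "\<dots> \<le> (\<Sum>xs\<in>Bset P L T Q m. card (P - T) - 1 - m * q)"
    by (intro sum_mono allowed_card[OF pp Q])
  also have "\<dots> = card (Bset P L T Q m) * (card (P - T) - 1 - m * q)" by simp
  also have "\<dots> \<le> (\<Prod>i<m. card (P - T) - 1 - i * q) * (card (P - T) - 1 - m * q)"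
    using Suc.IH by (rule mult_right_mono) simp
  also have "\<dots> = (\<Prod>i<Suc m. card (P - T) - 1 - i * q)" by simp
  finally show ?case .
qed

lemma prod_conv: "m \<le> (n::nat) \<Longrightarrow> \<Prod>{n - m + 1 .. n} = (\<Prod>i<m. n - i)"
proof (induction m)
  case 0 thus ?case by simp
next
  case (Suc m)
  have "{n - Suc m + 1 .. n} = insert (n - m) {n - m + 1 .. n}" using Suc.prems by auto
  hence "\<Prod>{n - Suc m + 1 .. n} = (n - m) * \<Prod>{n - m + 1 .. n}" by simp
  thus ?case using Suc by (simp add: mult.commute)
qed

lemma total_count:
  assumes "finite A" "m \<le> card A"
  shows "card {xs. set xs \<subseteq> A \<and> distinct xs \<and> length xs = m} = (\<Prod>i<m. card A - i)"
proof -
  have "{xs. set xs \<subseteq> A \<and> distinct xs \<and> length xs = m} = {xs. length xs = m \<and> distinct xs \<and> set xs \<subseteq> A}" by auto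
  thus ?thesis using card_lists_distinct_length_eq[OF assms] prod_conv[OF assms(2)] by simp
qed

lemma exists_below_avg:
  assumes "finite X" "X \<noteq> {}"
  shows "\<exists>x\<in>X. f x * card X \<le> (\<Sum>y\<in>X. (f y :: nat))"
proof (rule ccontr)
  assume "\<not> ?thesis"
  hence h: "\<And>x. x \<in> X \<Longrightarrow> (\<Sum>y\<in>X. f y) < f x * card X" by force
  have "(\<Sum>x\<in>X. (\<Sum>y\<in>X. f y)) < (\<Sum>x\<in>X. f x * card X)"
    using assms h by (intro sum_strict_mono) auto
  thus False by (simp add: sum_distrib_left mult.commute[of "card X"])
qed




lemma factor_mono:
  assumes "i < m" "m \<le> n" "n \<le> N" "q \<ge> 1"
  shows "real (n - 1 - i*q) / real (n - i) \<le> real (N - 1 - i*q) / real (N - i)"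
proof (cases "n - 1 - i*q = 0")
  case True
  thus ?thesis by simp
next
  case False
  hence h: "n > 1 + i*q" by simp
  have "i*1 \<le> i*q" using assms(4) by (rule mult_le_mono2)
  hence ai: "i \<le> 1 + i*q" by linarith
  have r1: "real (n - 1 - i*q) = real n - (1 + real i * real q)" using h by (simp add: of_nat_diff)
  have r2: "real (N - 1 - i*q) = real N - (1 + real i * real q)" using h assms(3) by (simp add: of_nat_diff)
  have r3: "real (n - i) = real n - real i" "real (N - i) = real N - real i" using assms by (simp_all add: of_nat_diff)
  have p1: "real n - real i > 0" "real N - real i > 0" using assms by simp_all
  define a where "a = 1 + real i * real q"
  have ai': "a \<ge> real i" unfolding a_def using ai by (metis of_nat_add of_nat_le_iff of_nat_mult of_nat_1)
  have key: "(real n - a) * (real N - real i) \<le> (real N - a) * (real n - real i)"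
  proof -
    have "(a - real i) * (real N - real n) \<ge> 0" using ai' assms(3) by simp
    thus ?thesis by (simp add: algebra_simps)
  qed
  show ?thesis unfolding r1 r2 r3 a_def[symmetric] using key p1
    by (simp add: divide_simps)
qed

lemma card_filter_swap:
  assumes "finite X" "finite Y"
  shows "(\<Sum>x\<in>X. card {y\<in>Y. R x y}) = (\<Sum>y\<in>Y. card {x\<in>X. R x y})"
proof -
  have "\<And>x. card {y\<in>Y. R x y} = (\<Sum>y\<in>Y. if R x y then 1 else 0)"
    using assms(2) by (simp add: sum.inter_filter[symmetric])
  moreover have "\<And>y. card {x\<in>X. R x y} = (\<Sum>x\<in>X. if R x y then 1 else 0)"
    using assms(1) by (simp add: sum.inter_filter[symmetric])
  ultimately show ?thesis by (simp add: sum.swap[of _ X Y])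
qed

lemma step:
  assumes pp: "projective_plane P L q" and TP: "T \<subseteq> P"
    and N: "N = q*q+q+1" and mN: "m \<le> N"
    and good: "real N * (\<Prod>i<m. real (N - 1 - i*q) / real (N - i)) < real k + 1"
  shows "\<exists>S \<subseteq> P - T. card S \<le> m + k \<and>
     (\<forall>Q\<in>P - T - S. \<exists>l\<in>L. Q \<in> l \<and> (\<exists>a\<in>S\<inter>l. \<exists>b\<in>(S\<union>T)\<inter>l. b \<noteq> a))"
proof -
  define n where "n = card (P - T)"
  have finP: "finite P" using pp_facts(1)[OF pp] .
  have finPT: "finite (P - T)" using finP by simp
  have q1: "q \<ge> 1" using pp_q2[OF pp] by simp
  have nN: "n \<le> N" unfolding n_def N using pp_cardP[OF pp] card_mono[OF finP, of "P - T"] by auto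
  show ?thesis
  proof (cases "n < m")
    case True
    show ?thesis by (rule exI[of _ "P - T"]) (use True n_def in auto)
  next
    case False
    hence mn: "m \<le> n" by simp
    define X where "X = {xs. set xs \<subseteq> P - T \<and> distinct xs \<and> length xs = m}"
    define f where "f = (\<lambda>xs. card {Q\<in>P - T. bad L T Q (set xs)})"
    have cX: "card X = (\<Prod>i<m. n - i)" unfolding X_def n_def using total_count[OF finPT] mn n_def by simp
    have cXpos: "card X > 0" unfolding cX using mn by (simp add: prod_pos)
    have finX: "finite X" using cXpos card_gt_0_iff by blast
    hence Xne: "X \<noteq> {}" using cXpos by auto
    have "(\<Sum>xs\<in>X. f xs) = (\<Sum>Q\<in>P - T. card {xs\<in>X. bad L T Q (set xs)})"
      unfolding f_def by (rule card_filter_swap[OF finX finPT])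
    also have "\<dots> \<le> (\<Sum>Q\<in>P - T. \<Prod>i<m. n - 1 - i * q)"
    proof (rule sum_mono)
      fix Q assume Q: "Q \<in> P - T"
      have "{xs\<in>X. bad L T Q (set xs)} = Bset P L T Q m" unfolding X_def Bset_def by auto
      thus "card {xs\<in>X. bad L T Q (set xs)} \<le> (\<Prod>i<m. n - 1 - i * q)"
        using bad_count[OF pp Q, of m] n_def by simp
    qed
    also have "\<dots> = n * (\<Prod>i<m. n - 1 - i * q)" using n_def by simp
    finally have sumb: "(\<Sum>xs\<in>X. f xs) \<le> n * (\<Prod>i<m. n - 1 - i * q)" .
    obtain xs where xs: "xs \<in> X" "f xs * card X \<le> (\<Sum>xs\<in>X. f xs)"
      using exists_below_avg[OF finX Xne] by blast
    have "real (f xs) * real (card X) \<le> real n * (\<Prod>i<m. real (n - 1 - i * q))"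
      using order_trans[OF xs(2) sumb] by (metis of_nat_le_iff of_nat_mult of_nat_prod)
    hence h: "real (f xs) * (\<Prod>i<m. real (n - i)) \<le> real n * (\<Prod>i<m. real (n - 1 - i * q))"
      unfolding cX by (simp add: of_nat_prod)
    have D: "(\<Prod>i<m. real (n - i)) > 0" by (intro prod_pos) (use mn in auto)
    have "real (f xs) \<le> real n * (\<Prod>i<m. real (n - 1 - i * q)) / (\<Prod>i<m. real (n - i))"
      by (subst pos_le_divide_eq[OF D]) (rule h)
    also have "\<dots> = real n * (\<Prod>i<m. real (n - 1 - i * q) / real (n - i))"
      by (simp add: prod_dividef)
    also have "\<dots> \<le> real N * (\<Prod>i<m. real (N - 1 - i * q) / real (N - i))"
    proof (rule mult_mono)
      show "real n \<le> real N" using nN by simp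
      show "(\<Prod>i<m. real (n - 1 - i * q) / real (n - i)) \<le> (\<Prod>i<m. real (N - 1 - i * q) / real (N - i))"
        by (rule prod_mono) (use factor_mono[OF _ mn nN q1] in auto)
      show "0 \<le> real N" by simp
      show "0 \<le> (\<Prod>i<m. real (n - 1 - i * q) / real (n - i))" by (intro prod_nonneg) auto
    qed
    finally have "real (f xs) < real k + 1" using good by linarith
    hence fk: "f xs \<le> k" by linarith
    define S where "S = set xs \<union> {Q\<in>P - T. bad L T Q (set xs)}"
    have xsP: "set xs \<subseteq> P - T" "distinct xs" "length xs = m" using xs(1) unfolding X_def by auto
    have SP: "S \<subseteq> P - T" unfolding S_def using xsP by auto
    have "card S \<le> card (set xs) + f xs" unfolding S_def f_def by (rule card_Un_le)
    hence cS: "card S \<le> m + k" using fk distinct_card[OF xsP(2)] xsP(3) by simp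
    have prp: "\<forall>Q\<in>P - T - S. \<exists>l\<in>L. Q \<in> l \<and> (\<exists>a\<in>S\<inter>l. \<exists>b\<in>(S\<union>T)\<inter>l. b \<noteq> a)"
    proof
      fix Q assume Q: "Q \<in> P - T - S"
      hence nb: "\<not> bad L T Q (set xs)" and Qx: "Q \<notin> set xs" unfolding S_def by auto
      then obtain a l where al: "a \<in> set xs" "l \<in> L" "Q \<in> l" "a \<in> l" "l \<inter> (set xs \<union> T) \<noteq> {a}"
        unfolding bad_def by blast
      then obtain b where b: "b \<in> l" "b \<in> set xs \<union> T" "b \<noteq> a" by blast
      show "\<exists>l\<in>L. Q \<in> l \<and> (\<exists>a\<in>S\<inter>l. \<exists>b\<in>(S\<union>T)\<inter>l. b \<noteq> a)"
        using al b unfolding S_def by blast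
    qed
    show ?thesis using SP cS prp by blast
  qed
qed

lemma iterate:
  assumes pp: "projective_plane P L q"
    and st: "\<And>T. T \<subseteq> P \<Longrightarrow> \<exists>S \<subseteq> P - T. real (card S) \<le> B \<and>
     (\<forall>Q\<in>P - T - S. \<exists>l\<in>L. Q \<in> l \<and> (\<exists>a\<in>S\<inter>l. \<exists>b\<in>(S\<union>T)\<inter>l. b \<noteq> a))"
  shows "\<exists>U \<subseteq> P. real (card U) \<le> real i * B \<and> (\<forall>Q\<in>P - U. secant_count L U Q \<ge> i)"
proof (induction i)
  case 0
  show ?case by (rule exI[of _ "{}"]) simp
next
  case (Suc i)
  then obtain U where U: "U \<subseteq> P" "real (card U) \<le> real i * B" "\<forall>Q\<in>P - U. secant_count L U Q \<ge> i" by blast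
  obtain S where S: "S \<subseteq> P - U" "real (card S) \<le> B"
    "\<forall>Q\<in>P - U - S. \<exists>l\<in>L. Q \<in> l \<and> (\<exists>a\<in>S\<inter>l. \<exists>b\<in>(S\<union>U)\<inter>l. b \<noteq> a)" using st[OF U(1)] by blast
  have finL: "finite L" by (rule pp_finL[OF pp])
  have finl: "\<And>l. l \<in> L \<Longrightarrow> finite l" using pp_facts(1,2)[OF pp] finite_subset by blast
  have "card (U \<union> S) \<le> card U + card S" by (rule card_Un_le)
  hence c: "real (card (U \<union> S)) \<le> real (Suc i) * B" using U(2) S(2) by (simp add: algebra_simps)
  have sc: "\<forall>Q\<in>P - (U \<union> S). secant_count L (U \<union> S) Q \<ge> Suc i"
  proof
    fix Q assume Q: "Q \<in> P - (U \<union> S)"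
    then obtain l a b where l: "l \<in> L" "Q \<in> l" "a \<in> S" "a \<in> l" "b \<in> S \<union> U" "b \<in> l" "b \<noteq> a"
      using S(3) by blast
    have "a \<notin> U" using S(1) l(3) by auto
    have "secant_count L U Q + 1 \<le> secant_count L (U \<union> S) Q"
      by (rule sc_inc[OF finL finl _ l(1,2) l(4) _ \<open>a \<notin> U\<close> l(6) _ l(7)]) (use l in auto)
    thus "secant_count L (U \<union> S) Q \<ge> Suc i" using U(3) Q by force
  qed
  show ?case using U(1) S(1) c sc by (intro exI[of _ "U \<union> S"]) auto
qed




lemma ln_ge_lgb:
  fixes q :: nat assumes "q \<ge> 2"
  shows "ln (real q + 1) \<ge> 2/3 * (if q = 2 then 1 else if q \<le> 6 then 2 else if q \<le> 14 then 3 else 4)"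
proof -
  have l2: "ln (2::real) \<ge> 2/3" by (rule ln2_ge_two_thirds)
  have lp: "\<And>j::nat. 2^j \<le> real q + 1 \<Longrightarrow> ln (real q + 1) \<ge> real j * (2/3)"
  proof -
    fix j :: nat assume "2^j \<le> real q + 1"
    hence "ln (2^j) \<le> ln (real q + 1)" by (intro ln_mono) auto
    moreover have "ln ((2::real)^j) = real j * ln 2" by (simp add: ln_realpow)
    moreover have "real j * ln 2 \<ge> real j * (2/3)" using l2 by (intro mult_left_mono) auto
    ultimately show "ln (real q + 1) \<ge> real j * (2/3)" by linarith
  qed
  show ?thesis
  proof (cases "q = 2")
    case True thus ?thesis using lp[of 1] by simp
  next
    case F2: False
    show ?thesis
    proof (cases "q \<le> 6")
      case True thus ?thesis using lp[of 2] F2 assms by simp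
    next
      case F6: False
      show ?thesis
      proof (cases "q \<le> 14")
        case True thus ?thesis using lp[of 3] F2 F6 by simp
      next
        case False thus ?thesis using lp[of 4] F2 F6 by simp
      qed
    qed
  qed
qed

lemma B6:
  fixes y L s u N :: real
  assumes y: "y \<ge> 32" and L: "L = ln y" and s: "s = sqrt (y*L)"
    and u: "u > 2* s" and N: "N = y*y - y + 1"
  shows "N * exp (-(u + (y-2)*(u*(u-1))/2)/N) < 2"
proof -
  have l2: "ln (2::real) \<ge> 2/3" "ln (2::real) \<le> 25/36" by (rule ln2_ge_two_thirds, rule ln2_le_25_over_36)
  have ln32: "ln (32::real) = 5 * ln 2"
    using ln_realpow[of "2::real" 5] by simp
  have "ln (y/32) \<le> y/32 - 1" using y by (intro ln_le_minus_one) auto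
  moreover have "ln (y/32) = ln y - ln 32" using y by (simp add: ln_div)
  ultimately have Lb: "L \<le> y/8" using L ln32 l2 y by linarith
  have L1: "L \<ge> 1"
  proof -
    have "ln 32 \<le> ln y" using y by (intro ln_mono) auto
    thus ?thesis using L ln32 l2 by linarith
  qed
  have yL: "y * L \<ge> 0" using y L1 by simp
  have s2: "s * s = y * L" using s yL by (simp add: real_sqrt_mult_self)
  have s0: "s \<ge> 0" using s yL by simp
  have sb: "s \<le> 9/25 * y"
  proof (rule power2_le_imp_le)
    have "y * L \<le> y * (y/8)" using Lb y by (intro mult_left_mono) auto
    thus "s^2 \<le> (9/25*y)^2" using s2 y by (simp add: power2_eq_square algebra_simps)
    show "0 \<le> 9/25*y" using y by simp
  qed
  have s1: "s \<ge> 1"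
  proof -
    have "1 * 1 \<le> y * L" using y L1 by (intro mult_mono) auto
    thus ?thesis using s by simp
  qed
  have u2: "u * (u - 1) \<ge> (2* s) * (2* s - 1)"
    using u s1 by (intro mult_mono) auto
  define K where "K = u + (y-2)*(u*(u-1))/2"
  have Kb: "K \<ge> (y-2) * ((2* s) * (2* s - 1)) / 2"
  proof -
    have "(y-2)*((2* s)*(2* s-1)) \<le> (y-2)*(u*(u-1))" using u2 y by (intro mult_left_mono) auto
    thus ?thesis unfolding K_def using u s0 by linarith
  qed
  have Kb2: "K \<ge> 2*(y*(y*L)) - 4*(y*L) - y* s + 2* s"
  proof -
    have "(y-2) * ((2* s) * (2* s - 1)) / 2 = 2*y*(s* s) - 4*(s* s) - y* s + 2* s" by (simp add: field_simps)
    thus ?thesis using Kb s2 by simp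
  qed
  have "y*(y-1) \<ge> 0" using y by simp
  hence Npos: "N > 0" using N by (simp add: algebra_simps)
  have "y*L \<le> y*(y/8)" using Lb y by (intro mult_left_mono) auto
  hence f2: "y*L \<le> (y*y)/8" by simp
  have "y* s \<le> y*(9/25*y)" using sb y by (intro mult_left_mono) auto
  hence f3: "y* s \<le> 9/25*(y*y)" by simp
  have "N * (2/3) \<le> N * ln 2" using Npos l2 by (intro mult_left_mono) auto
  hence f4: "N * ln 2 \<ge> 2/3 * N" by simp
  have yy: "y*y \<ge> 32*y" using y by (intro mult_right_mono) auto
  have key: "K > N * (2*L - ln 2)"
  proof -
    have e: "N * (2*L - ln 2) = 2*(y*(y*L)) - 2*(y*L) + 2*L - N * ln 2" unfolding N by (simp add: algebra_simps)
    show ?thesis unfolding e using Kb2 f2 f3 f4 yy N s0 Lb y by linarith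
  qed
  hence "-K/N < ln 2 - 2*L" unfolding pos_divide_less_eq[OF Npos] by (simp add: algebra_simps)
  hence "exp (-K/N) < exp (ln 2 - 2*L)" by simp
  also have "exp (ln 2 - 2*L) = 2 / (y*y)"
  proof -
    have eL: "exp L = y" using y L by simp
    have "exp (2*L) = exp (L + L)" by (simp only: mult_2)
    also have "\<dots> = exp L * exp L" by (rule exp_add)
    finally have "exp (2*L) = exp L * exp L" .
    thus ?thesis using eL by (simp add: exp_diff)
  qed
  finally have ex: "exp (-K/N) < 2/(y*y)" .
  have "N * exp (-K/N) < N * (2/(y*y))" by (rule mult_strict_left_mono[OF ex Npos])
  also have "\<dots> \<le> 2" using N y by (simp add: field_simps)
  finally show ?thesis unfolding K_def .
qed




lemma prod_lt_num: "prod f {..<numeral k} = prod f {..<pred_numeral k} * (f (pred_numeral k) :: nat)"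
  by (simp add: numeral_eq_Suc)

definition goodq :: "nat \<Rightarrow> bool" where
  "goodq q \<longleftrightarrow> (\<exists>m k. m \<le> q*q+q+1 \<and>
     real (q*q+q+1) * (\<Prod>i<m. real (q*q+q+1 - 1 - i*q) / real (q*q+q+1 - i)) < real k + 1 \<and>
     real m + real k \<le> 2 * sqrt ((real q + 1) * ln (real q + 1)) + 2)"

definition lgb :: "nat \<Rightarrow> nat" where
  "lgb q = (if q = 2 then 1 else if q \<le> 6 then 2 else if q \<le> 14 then 3 else 4)"

lemma from_chk:
  fixes q m k :: nat
  assumes q: "q \<ge> 2" and mN: "m \<le> q*q+q+1" and mk: "2 \<le> m + k"
    and pr: "(q*q+q+1) * (\<Prod>i<m. q*q+q+1 - 1 - i*q) < (k+1) * (\<Prod>i<m. q*q+q+1 - i)"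
    and lg: "3*(m+k-2)^2 \<le> 8*(q+1)*lgb q"
  shows "goodq q"
  unfolding goodq_def
proof (intro exI conjI)
  define N where "N = q*q+q+1"
  show "m \<le> q*q+q+1" by (rule mN)
  have B: "(\<Prod>i<m. real (N - i)) > 0"
  proof (rule prod_pos)
    fix i assume "i \<in> {..<m}"
    hence "i < N" using mN N_def by simp
    thus "0 < real (N - i)" by simp
  qed
  have "real N * (\<Prod>i<m. real (N - 1 - i*q)) < (real k + 1) * (\<Prod>i<m. real (N - i))"
  proof -
    have "real (N * (\<Prod>i<m. N - 1 - i*q)) < real ((k+1) * (\<Prod>i<m. N - i))"
      using pr N_def by (simp only: of_nat_less_iff)
    thus ?thesis by (simp add: of_nat_prod algebra_simps)
  qed
  hence "real N * (\<Prod>i<m. real (N - 1 - i*q)) / (\<Prod>i<m. real (N - i)) < real k + 1"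
    by (subst pos_divide_less_eq[OF B])
  thus "real (q*q+q+1) * (\<Prod>i<m. real (q*q+q+1 - 1 - i*q) / real (q*q+q+1 - i)) < real k + 1"
    unfolding N_def[symmetric] by (simp add: prod_dividef)
  define s where "s = sqrt ((real q + 1) * ln (real q + 1))"
  define d where "d = real m + real k - 2"
  have d0: "d \<ge> 0" using mk d_def by simp
  have dr: "real (m+k-2) = d" using mk d_def by (simp add: of_nat_diff)
  have "3 * d^2 \<le> 8 * (real q + 1) * real (lgb q)"
  proof -
    have "real (3*(m+k-2)^2) \<le> real (8*(q+1)*lgb q)" using lg by (simp only: of_nat_le_iff)
    thus ?thesis using dr by (simp add: algebra_simps)
  qed
  moreover have "real (lgb q) * (2/3) \<le> ln (real q + 1)"
    using ln_ge_lgb[OF q] unfolding lgb_def by (auto split: if_splits)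
  ultimately have dd: "d^2 \<le> 4 * ((real q + 1) * ln (real q + 1))"
  proof -
    assume a1: "3 * d^2 \<le> 8 * (real q + 1) * real (lgb q)" and a2: "real (lgb q) * (2/3) \<le> ln (real q + 1)"
    have "(real q + 1) * (real (lgb q) * (2/3)) \<le> (real q + 1) * ln (real q + 1)"
      using a2 by (intro mult_left_mono) auto
    thus ?thesis using a1 by (simp add: algebra_simps)
  qed
  have ss: "(2* s)^2 = 4 * ((real q + 1) * ln (real q + 1))"
  proof -
    have "ln (real q + 1) \<ge> 0" using q by simp
    hence "(real q + 1) * ln (real q + 1) \<ge> 0" by simp
    thus ?thesis unfolding s_def by (simp add: power_mult_distrib)
  qed
  have s0: "0 \<le> 2 * s" unfolding s_def using q by simp
  have "d \<le> 2* s" by (rule power2_le_imp_le[OF _ s0]) (use dd ss in simp)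
  thus "real m + real k \<le> 2 * sqrt ((real q + 1) * ln (real q + 1)) + 2" using d_def s_def by simp
qed

lemma g2: "goodq 2"
  by (rule from_chk[of 2 3 1]) (simp_all add: prod_lt_num lgb_def)

lemma g3: "goodq 3"
  by (rule from_chk[of 3 4 1]) (simp_all add: prod_lt_num lgb_def)

lemma g4: "goodq 4"
  by (rule from_chk[of 4 5 1]) (simp_all add: prod_lt_num lgb_def)

lemma g5: "goodq 5"
  by (rule from_chk[of 5 6 0]) (simp_all add: prod_lt_num lgb_def)

lemma g6: "goodq 6"
  by (rule from_chk[of 6 7 0]) (simp_all add: prod_lt_num lgb_def)

lemma g7: "goodq 7"
  by (rule from_chk[of 7 7 1]) (simp_all add: prod_lt_num lgb_def)

lemma g8: "goodq 8"
  by (rule from_chk[of 8 8 0]) (simp_all add: prod_lt_num lgb_def)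

lemma g9: "goodq 9"
  by (rule from_chk[of 9 9 0]) (simp_all add: prod_lt_num lgb_def)

lemma g10: "goodq 10"
  by (rule from_chk[of 10 9 1]) (simp_all add: prod_lt_num lgb_def)

lemma g11: "goodq 11"
  by (rule from_chk[of 11 10 0]) (simp_all add: prod_lt_num lgb_def)

lemma g12: "goodq 12"
  by (rule from_chk[of 12 10 1]) (simp_all add: prod_lt_num lgb_def)

lemma g13: "goodq 13"
  by (rule from_chk[of 13 11 0]) (simp_all add: prod_lt_num lgb_def)

lemma g14: "goodq 14"
  by (rule from_chk[of 14 11 1]) (simp_all add: prod_lt_num lgb_def)

lemma g15: "goodq 15"
  by (rule from_chk[of 15 12 0]) (simp_all add: prod_lt_num lgb_def)

lemma g16: "goodq 16"
  by (rule from_chk[of 16 12 1]) (simp_all add: prod_lt_num lgb_def)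

lemma g17: "goodq 17"
  by (rule from_chk[of 17 13 0]) (simp_all add: prod_lt_num lgb_def)

lemma g18: "goodq 18"
  by (rule from_chk[of 18 13 1]) (simp_all add: prod_lt_num lgb_def)

lemma g19: "goodq 19"
  by (rule from_chk[of 19 14 0]) (simp_all add: prod_lt_num lgb_def)

lemma g20: "goodq 20"
  by (rule from_chk[of 20 14 1]) (simp_all add: prod_lt_num lgb_def)

lemma g21: "goodq 21"
  by (rule from_chk[of 21 15 0]) (simp_all add: prod_lt_num lgb_def)

lemma g22: "goodq 22"
  by (rule from_chk[of 22 15 1]) (simp_all add: prod_lt_num lgb_def)

lemma g23: "goodq 23"
  by (rule from_chk[of 23 16 0]) (simp_all add: prod_lt_num lgb_def)

lemma g24: "goodq 24"
  by (rule from_chk[of 24 16 1]) (simp_all add: prod_lt_num lgb_def)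

lemma g25: "goodq 25"
  by (rule from_chk[of 25 16 1]) (simp_all add: prod_lt_num lgb_def)

lemma g26: "goodq 26"
  by (rule from_chk[of 26 16 2]) (simp_all add: prod_lt_num lgb_def)

lemma g27: "goodq 27"
  by (rule from_chk[of 27 17 1]) (simp_all add: prod_lt_num lgb_def)

lemma g28: "goodq 28"
  by (rule from_chk[of 28 17 2]) (simp_all add: prod_lt_num lgb_def)

lemma g29: "goodq 29"
  by (rule from_chk[of 29 18 1]) (simp_all add: prod_lt_num lgb_def)

lemma g30: "goodq 30"
  by (rule from_chk[of 30 19 0]) (simp_all add: prod_lt_num lgb_def)

lemma small_q: assumes "2 \<le> q" "q \<le> 30" shows "goodq q"
proof -
  have "q = 2 \<or> q = 3 \<or> q = 4 \<or> q = 5 \<or> q = 6 \<or> q = 7 \<or> q = 8 \<or> q = 9 \<or> q = 10 \<or> q = 11 \<or> q = 12 \<or> q = 13 \<or> q = 14 \<or> q = 15 \<or> q = 16 \<or> q = 17 \<or> q = 18 \<or> q = 19 \<or> q = 20 \<or> q = 21 \<or> q = 22 \<or> q = 23 \<or> q = 24 \<or> q = 25 \<or> q = 26 \<or> q = 27 \<or> q = 28 \<or> q = 29 \<or> q = 30" using assms by presburger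
  thus ?thesis using g2 g3 g4 g5 g6 g7 g8 g9 g10 g11 g12 g13 g14 g15 g16 g17 g18 g19 g20 g21 g22 g23 g24 g25 g26 g27 g28 g29 g30 by blast
qed




lemma fac_exp:
  fixes N q i :: nat
  assumes q: "q \<ge> 1" and i: "i < N"
  shows "real (N - 1 - i*q) / real (N - i) \<le> exp (-(1 + real i * (real q - 1)) / real N)"
proof (cases "N - 1 - i*q = 0")
  case True thus ?thesis by simp
next
  case False
  hence h: "N > 1 + i*q" by simp
  define c where "c = 1 + real i * (real q - 1)"
  have c0: "c \<ge> 0" unfolding c_def using q by simp
  have r1: "real (N - 1 - i*q) = real N - 1 - real i * real q" using h by (simp add: of_nat_diff)
  have r2: "real (N - i) = real N - real i" using i by (simp add: of_nat_diff)
  have Ni: "real N - real i > 0" "real N > 0" using i by simp_all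
  have "real (N - 1 - i*q) / real (N - i) = 1 - c / (real N - real i)"
    unfolding r1 r2 c_def using Ni by (simp add: field_simps)
  also have "\<dots> \<le> 1 - c / real N"
  proof -
    have "c / real N \<le> c / (real N - real i)" using c0 Ni by (intro divide_left_mono) auto
    thus ?thesis by simp
  qed
  also have "\<dots> \<le> exp (- (c / real N))" using exp_ge_add_one_self[of "- (c / real N)"] by simp
  finally show ?thesis unfolding c_def minus_divide_left .
qed

lemma sum_i: "(\<Sum>i<m. real i) = real m * (real m - 1) / 2"
  by (induction m) (auto simp: field_simps)

lemma big_q: assumes q: "q \<ge> 31" shows "goodq q"
proof -
  define y where "y = real q + 1"
  define L where "L = ln y"
  define s where "s = sqrt (y * L)"
  define N where "N = q*q+q+1"
  have y: "y \<ge> 32" using q y_def by simp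
  have l2: "ln (2::real) \<ge> 2/3" "ln (2::real) \<le> 25/36" by (rule ln2_ge_two_thirds, rule ln2_le_25_over_36)
  have ln32: "ln (32::real) = 5 * ln 2" using ln_realpow[of "2::real" 5] by simp
  have "ln (y/32) \<le> y/32 - 1" using y by (intro ln_le_minus_one) auto
  moreover have "ln (y/32) = ln y - ln 32" using y by (simp add: ln_div)
  ultimately have Lb: "L \<le> y/8" using L_def ln32 l2 y by linarith
  have L1: "L \<ge> 1"
  proof -
    have "ln 32 \<le> ln y" using y by (intro ln_mono) auto
    thus ?thesis using L_def ln32 l2 by linarith
  qed
  have yL: "y * L \<ge> 0" using y L1 by simp
  have s2: "s * s = y * L" unfolding s_def using real_sqrt_mult_self[of "y*L"] abs_of_nonneg[OF yL] by linarith
  have s0: "s \<ge> 0" using s_def yL by simp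
  have sb: "s \<le> 9/25 * y"
  proof (rule power2_le_imp_le)
    have "y * L \<le> y * (y/8)" using Lb y by (intro mult_left_mono) auto
    thus "s^2 \<le> (9/25*y)^2" using s2 y by (simp add: power2_eq_square algebra_simps)
    show "0 \<le> 9/25*y" using y by simp
  qed
  define m where "m = nat \<lfloor>2 * s\<rfloor> + 1"
  have fl: "real_of_int \<lfloor>2 * s\<rfloor> \<le> 2 * s" "2 * s < real_of_int \<lfloor>2 * s\<rfloor> + 1" by linarith+
  have rm: "real m = real_of_int \<lfloor>2 * s\<rfloor> + 1" unfolding m_def using s0 by simp
  have m1: "real m > 2 * s" "real m \<le> 2 * s + 1" using fl rm by linarith+
  have rN: "real N = y*y - y + 1" unfolding N_def y_def by (simp add: algebra_simps)
  have "y*y \<ge> 32*y" using y by (intro mult_right_mono) auto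
  hence "real m \<le> real N" using m1 sb rN y by linarith
  hence mN: "m \<le> N" by simp
  have q1: "q \<ge> 1" using q by simp
  have "(\<Prod>i<m. real (N - 1 - i*q) / real (N - i)) \<le> (\<Prod>i<m. exp (-(1 + real i * (real q - 1)) / real N))"
    by (rule prod_mono) (use fac_exp[OF q1] mN in \<open>auto intro!: divide_nonneg_nonneg\<close>)
  also have "\<dots> = exp (\<Sum>i<m. -(1 + real i * (real q - 1)) / real N)" by (simp add: exp_sum)
  also have "(\<Sum>i<m. -(1 + real i * (real q - 1)) / real N) = -(real m + (y-2)*(real m*(real m-1))/2) / real N"
  proof -
    have "(\<Sum>i<m. -(1 + real i * (real q - 1)) / real N) = -(\<Sum>i<m. (1 + real i * (real q - 1))) / real N"
      by (simp only: sum_divide_distrib[symmetric] sum_negf)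
    also have "(\<Sum>i<m. (1 + real i * (real q - 1))) = real m + (real q - 1) * (\<Sum>i<m. real i)"
      by (simp add: sum.distrib sum_distrib_left mult.commute)
    also have "\<dots> = real m + (y-2)*(real m*(real m-1))/2" unfolding sum_i y_def by simp
    finally show ?thesis .
  qed
  finally have pb: "(\<Prod>i<m. real (N - 1 - i*q) / real (N - i)) \<le> exp (-(real m + (y-2)*(real m*(real m-1))/2) / real N)" .
  have B: "real N * exp (-(real m + (y-2)*(real m*(real m-1))/2) / real N) < 2"
    by (rule B6[OF y L_def s_def m1(1) rN])
  have "real N * (\<Prod>i<m. real (N - 1 - i*q) / real (N - i)) < real 1 + 1"
    using mult_left_mono[OF pb, of "real N"] B by simp
  moreover have "real m + real (1::nat) \<le> 2 * sqrt ((real q + 1) * ln (real q + 1)) + 2"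
    using m1 s_def L_def y_def by simp
  ultimately show ?thesis unfolding goodq_def N_def using mN N_def by blast
qed

lemma all_good: "q \<ge> 2 \<Longrightarrow> goodq q"
  using small_q big_q by (cases "q \<le> 30") auto




lemma D_lower:
  assumes d: "\<delta> \<ge> 0" and qq: "qr \<ge> 0"
  shows "i \<ge> 1 \<Longrightarrow> Dseq qr \<delta> i \<ge> 1 + (real i - 1) * (1 + \<delta>)"
proof (induction i)
  case 0 thus ?case by simp
next
  case (Suc i)
  show ?case
  proof (cases "i = 0")
    case True thus ?thesis by simp
  next
    case False
    hence IH: "Dseq qr \<delta> i \<ge> 1 + (real i - 1) * (1 + \<delta>)" using Suc.IH by simp
    have "(real i - 1) * (1 + \<delta>) \<ge> 0" using False d by simp
    hence D0: "Dseq qr \<delta> i \<ge> 0" using IH by linarith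
    have "(Dseq qr \<delta> i + \<delta>) / qr \<ge> 0" using D0 d qq by simp
    thus ?thesis using IH False by (simp add: algebra_simps)
  qed
qed

theorem corollary3:
  fixes P :: "'a set" and L :: "'a set set" and q \<mu> :: nat and \<delta> :: real
  assumes "projective_plane P L q"
    and "\<mu> \<ge> 2"
    and "\<delta> = 1 / sqrt ((real q + 1) * ln (real q + 1))"
  shows "(\<exists>S. saturating_1 P L \<mu> S \<and>
            real (card S) \<le> 2 * Dseq (real q) \<delta> \<mu> * sqrt ((real q + 1) * ln (real q + 1)) + 2)
       \<and> (real \<mu> \<le> sqrt (real q) \<longrightarrow> (\<exists>S. saturating_1 P L \<mu> S \<and>
            real (card S) \<le> 2 * (real \<mu> + 1) * sqrt ((real q + 1) * ln (real q + 1)) + 2))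
       \<and> (real \<mu> \<le> ((1 - \<delta>) * real q - \<delta> + 1) / 2 + 1 \<longrightarrow> (\<exists>S. saturating_1 P L \<mu> S \<and>
            real (card S) \<le> 2 * (2 * real \<mu> - 1) * sqrt ((real q + 1) * ln (real q + 1)) + 2))"
proof -
  note pp = assms(1)
  define s where "s = sqrt ((real q + 1) * ln (real q + 1))"
  have q2: "q \<ge> 2" by (rule pp_q2[OF pp])
  have lnq: "ln (real q + 1) \<ge> 2/3" using ln_ge_lgb[OF q2] by (auto split: if_splits)
  have lnq2: "ln (real q + 1) * (real q + 1) \<ge> real q"
  proof (cases "q = 2")
    case True
    thus ?thesis using lnq by simp
  next
    case False
    hence "ln (real q + 1) \<ge> 1" using ln_ge_lgb[OF q2] by (auto split: if_splits)
    hence "ln (real q + 1) * (real q + 1) \<ge> 1 * (real q + 1)" by (intro mult_right_mono) auto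
    thus ?thesis by (rule order_trans[rotated]) simp
  qed
  have sq: "sqrt (real q) \<le> s" unfolding s_def using lnq2 by (simp add: mult.commute)
  have s1: "s \<ge> 1"
  proof -
    have "real q \<ge> 2" using q2 by simp
    hence "sqrt 2 \<le> sqrt (real q)" by simp
    moreover have "(1::real) \<le> sqrt 2" by simp
    ultimately show ?thesis using sq by linarith
  qed
  obtain m k where mk: "m \<le> q*q+q+1"
    "real (q*q+q+1) * (\<Prod>i<m. real (q*q+q+1 - 1 - i*q) / real (q*q+q+1 - i)) < real k + 1"
    "real m + real k \<le> 2 * s + 2"
    using all_good[OF q2] unfolding goodq_def s_def by blast
  have st: "\<And>T. T \<subseteq> P \<Longrightarrow> \<exists>S \<subseteq> P - T. real (card S) \<le> 2 * s + 2 \<and>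
     (\<forall>Q\<in>P - T - S. \<exists>l\<in>L. Q \<in> l \<and> (\<exists>a\<in>S\<inter>l. \<exists>b\<in>(S\<union>T)\<inter>l. b \<noteq> a))"
  proof -
    fix T assume T: "T \<subseteq> P"
    obtain S where S: "S \<subseteq> P - T" "card S \<le> m + k"
      "\<forall>Q\<in>P - T - S. \<exists>l\<in>L. Q \<in> l \<and> (\<exists>a\<in>S\<inter>l. \<exists>b\<in>(S\<union>T)\<inter>l. b \<noteq> a)"
      using step[OF pp T refl mk(1) mk(2)] by blast
    have "real (card S) \<le> 2 * s + 2" using S(2) mk(3) by (metis of_nat_add of_nat_le_iff order_trans)
    thus "\<exists>S \<subseteq> P - T. real (card S) \<le> 2 * s + 2 \<and>
     (\<forall>Q\<in>P - T - S. \<exists>l\<in>L. Q \<in> l \<and> (\<exists>a\<in>S\<inter>l. \<exists>b\<in>(S\<union>T)\<inter>l. b \<noteq> a))" using S by blast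
  qed
  obtain U where U: "U \<subseteq> P" "real (card U) \<le> real \<mu> * (2 * s + 2)" "\<forall>Q\<in>P - U. secant_count L U Q \<ge> \<mu>"
    using iterate[OF pp st] by blast
  have sat: "saturating_1 P L \<mu> U" unfolding saturating_1_def using U by blast
  have mu1: "real \<mu> \<ge> 1" using assms(2) by simp
  have ds: "\<delta> * s = 1" using assms(3) s1 q2 unfolding s_def by simp
  have d0: "\<delta> \<ge> 0" using assms(3) by simp
  have Dl: "Dseq (real q) \<delta> \<mu> \<ge> 1 + (real \<mu> - 1) * (1 + \<delta>)"
    using D_lower[OF d0, of "real q" \<mu>] assms(2) by simp
  have "2 * Dseq (real q) \<delta> \<mu> * s \<ge> 2 * (1 + (real \<mu> - 1) * (1 + \<delta>)) * s"
    using Dl s1 by (intro mult_right_mono) auto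
  also have "2 * (1 + (real \<mu> - 1) * (1 + \<delta>)) * s = 2* s + 2*(real \<mu> - 1)* s + 2*(real \<mu> - 1)*(\<delta> * s)"
    by (simp add: algebra_simps)
  finally have i1: "2 * Dseq (real q) \<delta> \<mu> * s + 2 \<ge> real \<mu> * (2 * s + 2)" using ds by (simp add: algebra_simps)
  have "(real \<mu> - 1) * 1 \<le> (real \<mu> - 1) * s" using mu1 s1 by (intro mult_left_mono) auto
  hence i3: "real \<mu> * (2 * s + 2) \<le> 2 * (2 * real \<mu> - 1) * s + 2" by (simp add: algebra_simps)
  have i2: "real \<mu> \<le> sqrt (real q) \<Longrightarrow> real \<mu> * (2 * s + 2) \<le> 2 * (real \<mu> + 1) * s + 2"
    using sq s1 by (simp add: algebra_simps)
  show ?thesis unfolding s_def[symmetric] using sat U(2) i1 i2 i3 by (meson order_trans)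
qed


end
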